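(* Assume $\hat\beta_N\to\hat\beta\in(0,\infty)$ and work under the coupling described in the context. For every $\delta>0$ and $k\in\mathbb{N}$ there exists $N_k$ such that for all $N>N_k$, $\mathbb{P}\big(A^{(k)}_{\hat\beta_N,N}=A^{(k)}_{\hat\beta,\infty}\big)>1-\delta$.
   Context: Disorder: for $N\in\mathbb{N}$, $M^{(N)}_i=b_N^{-1}\times$($i$-th largest of $\omega_1,\dots,\omega_{N-1}$) and $Y^{(N)}_i=n_i/N$ with $\omega_{n_i}$ that value, for $i\le N-1$, and $(M^{(N)}_i,Y^{(N)}_i)=(0,0)$ for $i\ge N$; here $(\omega_n)$ are i.i.d. positive atomless with $\mathbb{P}(\omega_1>t)\sim L_0(t)t^{-\alpha}$, $\alpha\in(0,1)$, and $\mathbb{P}(\omega_1>b_N)\sim1/N$. Continuum: $M^{(\infty)}_i=T_i^{-1/\alpha}$ ($T_i$ sum of $i$ i.i.d. Exp(1)), $Y^{(\infty)}_i$ i.i.d. Uniform$[0,1]$ independent. Coupling: all $w^{(N)}=(M^{(N)}_i,Y^{(N)}_i)_{i\ge1}$, $N\in\mathbb{N}\cup\{\infty\}$, are defined on one probability space $\mathbb{P}$ (each with its correct law) so that a.s. $M^{(N)}_i\to M^{(\infty)}_i$ and $Y^{(N)}_i\to Y^{(\infty)}_i$ for every $i$. Entropy: $\gamma\in(0,1)$, for finite $I=\{0=x_0<\dots<x_\ell=1\}\subset[0,1]$, $E(I)=\sum(x_i-x_{i-1})^\gamma$. For $A\subset\{1,\dots,k\}$ let $Y^{(N)}_A=\{Y^{(N)}_i:i\in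 A\}\cup\{0,1\}$. For $\beta>0$, $A^{(k)}_{\beta,N}$ is the (a.s. unique) $A\subset\{1,\dots,(N-1)\wedge k\}$ maximizing $\beta\sum_{i\in A}M^{(N)}_i-E(Y^{(N)}_A)$; equivalently $Y^{(N)}_{A^{(k)}_{\beta,N}}$ is the unique maximizer over closed $I\ni0,1$ of $\beta\sum_{i\le (N-1)\wedge k}M^{(N)}_i\mathbf 1(Y^{(N)}_i\in I)-\bar E(I)$, $\bar E$ being the lower semicontinuous extension of $E$. *)

theory Defs
  imports "HOL-Probability.Probability" "HOL-Library.Landau_Symbols"
begin

definition slowly_varying :: "(real \<Rightarrow> real) \<Rightarrow> bool" where
  "slowly_varying L \<longleftrightarrow> (\<forall>t>0. L t > 0) \<and>
     (\<forall>c>0. ((\<lambda>t. L (c * t) / L t) \<longlongrightarrow> 1) at_top)"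

(* 0-based rank of omega_n among omega_1..omega_{N-1} (descending, ties broken by index) *)
definition disorder_rank :: "nat \<Rightarrow> (nat \<Rightarrow> real) \<Rightarrow> nat \<Rightarrow> nat" where
  "disorder_rank N \<omega> n =
     card {m \<in> {1..N-1}. \<omega> m > \<omega> n \<or> (\<omega> m = \<omega> n \<and> m < n)}"

(* index n_i of the i-th largest among omega_1..omega_{N-1}, for 1 <= i <= N-1 *)
definition disorder_idx :: "nat \<Rightarrow> (nat \<Rightarrow> real) \<Rightarrow> nat \<Rightarrow> nat" where
  "disorder_idx N \<omega> i = (THE n. n \<in> {1..N-1} \<and> disorder_rank N \<omega> n = i - 1)"

(* the configuration w^(N) = (M^(N)_i, Y^(N)_i) as a function of the disorder omega,
   at index i >= 1 *)
definition disorder_config :: "(nat \<Rightarrow> real) \<Rightarrow> nat \<Rightarrow> (nat \<Rightarrow> real) \<Rightarrow> nat \<Rightarrow> real \<times> real" where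
  "disorder_config b N \<omega> i =
     (if 1 \<le> i \<and> i \<le> N - 1
      then (\<omega> (disorder_idx N \<omega> i) / b N, real (disorder_idx N \<omega> i) / real N)
      else (0, 0))"

(* the continuum configuration: T_i = E_1 + ... + E_i, M_i = T_i^(-1/alpha), Y_i = U_i, i >= 1 *)
definition continuum_config :: "real \<Rightarrow> (nat \<Rightarrow> real) \<times> (nat \<Rightarrow> real) \<Rightarrow> nat \<Rightarrow> real \<times> real" where
  "continuum_config \<alpha> eu i =
     ((\<Sum>j\<in>{1..i}. fst eu j) powr (-1 / \<alpha>), snd eu i)"

definition exp1_law :: "real measure" where
  "exp1_law = density lborel (exponential_density 1)"

definition unif01_law :: "real measure" where
  "unif01_law = uniform_measure lborel {0..1}"

definition entropy :: "real \<Rightarrow> real set \<Rightarrow> real" where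
  "entropy \<gamma> I = (let xs = sorted_list_of_set I in
      (\<Sum>j < length xs - 1. (xs ! (j + 1) - xs ! j) powr \<gamma>))"

definition energy_obj :: "real \<Rightarrow> real \<Rightarrow> (nat \<Rightarrow> real) \<Rightarrow> (nat \<Rightarrow> real) \<Rightarrow> nat set \<Rightarrow> real" where
  "energy_obj \<gamma> \<beta> M Y A = \<beta> * (\<Sum>i\<in>A. M i) - entropy \<gamma> (Y ` A \<union> {0, 1})"

definition unique_maximizer :: "real \<Rightarrow> real \<Rightarrow> nat \<Rightarrow> (nat \<Rightarrow> real) \<Rightarrow> (nat \<Rightarrow> real) \<Rightarrow> nat set \<Rightarrow> bool" where
  "unique_maximizer \<gamma> \<beta> n M Y A \<longleftrightarrow> A \<subseteq> {1..n} \<and>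
     (\<forall>B. B \<subseteq> {1..n} \<and> B \<noteq> A \<longrightarrow> energy_obj \<gamma> \<beta> M Y B < energy_obj \<gamma> \<beta> M Y A)"

end

theory Submission
  imports Defs
begin


definition nx :: "real \<Rightarrow> real set \<Rightarrow> real \<Rightarrow> real" where
  "nx \<gamma> S s = (if \<exists>t\<in>S. s < t then (Min {t\<in>S. s < t} - s) powr \<gamma> else 0)"

lemma list_entropy:
  assumes "sorted_wrt (<) xs"
  shows "(\<Sum>j < length xs - 1. (xs ! (j + 1) - xs ! j) powr \<gamma>) = (\<Sum>s\<in>set xs. nx \<gamma> (set xs) s)"
  using assms
proof (induction xs)
  case Nil
  then show ?case by simp
next
  case (Cons x ys)
  have xs: "\<forall>y\<in>set ys. x < y" and sy: "sorted_wrt (<) ys" using Cons.prems by auto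
  have xn: "x \<notin> set ys" using xs by auto
  have eq1: "(\<Sum>s\<in>set ys. nx \<gamma> (insert x (set ys)) s) = (\<Sum>s\<in>set ys. nx \<gamma> (set ys) s)"
  proof (rule sum.cong[OF refl])
    fix s assume "s \<in> set ys"
    then have "{t\<in>insert x (set ys). s < t} = {t\<in>set ys. s < t}" using xs by auto
    then show "nx \<gamma> (insert x (set ys)) s = nx \<gamma> (set ys) s" unfolding nx_def
      by (metis (no_types, lifting) mem_Collect_eq)
  qed
  show ?case
  proof (cases ys)
    case Nil
    then show ?thesis by (simp add: nx_def)
  next
    case (Cons y zs)
    have yz: "\<forall>z\<in>set zs. y < z" using sy Cons by auto
    have "{t\<in>insert x (set ys). x < t} = set ys" using xs by auto
    moreover have "Min (set ys) = y" using yz Cons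
      by (auto intro!: Min_eqI simp: less_imp_le)
    ultimately have nxx: "nx \<gamma> (insert x (set ys)) x = (y - x) powr \<gamma>"
      unfolding nx_def using Cons by auto
    have "(\<Sum>j < length (x # ys) - 1. ((x#ys) ! (j + 1) - (x#ys) ! j) powr \<gamma>)
        = (\<Sum>j < Suc (length ys - 1). ((x#ys) ! (j + 1) - (x#ys) ! j) powr \<gamma>)"
      using Cons by simp
    also have "\<dots> = (y - x) powr \<gamma> + (\<Sum>j < length ys - 1. (ys ! (j + 1) - ys ! j) powr \<gamma>)"
      by (subst sum.lessThan_Suc_shift) (simp add: Cons)
    also have "\<dots> = (y - x) powr \<gamma> + (\<Sum>s\<in>set ys. nx \<gamma> (set ys) s)"
      using Cons.IH sy by simp
    also have "\<dots> = (\<Sum>s\<in>set (x#ys). nx \<gamma> (set (x#ys)) s)"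
      using xn nxx eq1 by simp
    finally show ?thesis .
  qed
qed

lemma entropy_nx:
  assumes "finite S"
  shows "entropy \<gamma> S = (\<Sum>s\<in>S. nx \<gamma> S s)"
  unfolding entropy_def Let_def
  using list_entropy[OF strict_sorted_list_of_set[of S], of \<gamma>] assms by simp

lemma sum_image_div:
  fixes h :: "'b \<Rightarrow> real"
  assumes "finite J"
  shows "(\<Sum>s\<in>f`J. h s) = (\<Sum>j\<in>J. h (f j) / real (card {t\<in>J. f t = f j}))"
proof -
  have "(\<Sum>j\<in>J. h (f j) / real (card {t\<in>J. f t = f j}))
     = (\<Sum>y\<in>f`J. \<Sum>j\<in>{x\<in>J. f x = y}. h (f j) / real (card {t\<in>J. f t = f j}))"
    using assms by (rule sum.image_gen)
  also have "\<dots> = (\<Sum>y\<in>f`J. h y)"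
  proof (rule sum.cong[OF refl])
    fix y assume y: "y \<in> f ` J"
    have "(\<Sum>j\<in>{x\<in>J. f x = y}. h (f j) / real (card {t\<in>J. f t = f j}))
        = (\<Sum>j\<in>{x\<in>J. f x = y}. h y / real (card {t\<in>J. f t = y}))"
      by (rule sum.cong) auto
    also have "\<dots> = h y" using y assms by (auto simp: card_eq_0_iff)
    finally show "(\<Sum>j\<in>{x\<in>J. f x = y}. h (f j) / real (card {t\<in>J. f t = f j})) = h y" .
  qed
  finally show ?thesis by simp
qed

lemma card_as_sum: "finite J \<Longrightarrow> real (card {t\<in>J. P t}) = (\<Sum>t\<in>J. if P t then 1 else 0)"
  by (simp add: sum.If_cases Int_def)

lemma Min_filter0:
  fixes f :: "'b \<Rightarrow> real"
  assumes J: "finite J" and t1: "t1 \<in> J" "a < f t1" and b: "\<And>t. t \<in> J \<Longrightarrow> f t \<le> b"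
  shows "Min {t\<in>f`J. a < t} = (MIN t\<in>J. (if a < f t then f t else b))"
proof -
  define g where "g t = (if a < f t then f t else b)" for t
  have fin: "finite {t\<in>f`J. a < t}" using J by simp
  have ne2: "f t1 \<in> {t\<in>f`J. a < t}" using t1 by simp
  have finJ: "finite (g ` J)" using J by simp
  have neJ: "g ` J \<noteq> {}" using t1 by blast
  have "Min (g ` J) \<in> g ` J" using finJ neJ by (rule Min_in)
  then obtain t0 where t0: "t0 \<in> J" "g t0 = Min (g ` J)" by force
  have "Min {t\<in>f`J. a < t} \<in> {t\<in>f`J. a < t}" using fin ne2 by (intro Min_in) blast+
  then obtain t2 where t2: "t2 \<in> J" "a < f t2" "f t2 = Min {t\<in>f`J. a < t}" by force
  have le1: "Min {t\<in>f`J. a < t} \<le> f t" if "t \<in> J" "a < f t" for t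
    using fin that by (intro Min_le) simp_all
  have le2: "Min (g ` J) \<le> g t" if "t \<in> J" for t
    using finJ that by (intro Min_le) simp_all
  have A: "Min {t\<in>f`J. a < t} \<le> Min (g ` J)"
  proof (cases "a < f t0")
    case True
    then show ?thesis using le1[OF t0(1) True] t0(2) unfolding g_def by simp
  next
    case False
    have "Min {t\<in>f`J. a < t} \<le> f t1" by (rule le1[OF t1])
    also have "\<dots> \<le> b" by (rule b[OF t1(1)])
    finally show ?thesis using t0(2) False unfolding g_def by simp
  qed
  have B: "Min (g ` J) \<le> Min {t\<in>f`J. a < t}"
    using le2[OF t2(1)] t2 unfolding g_def by simp
  show ?thesis using A B unfolding g_def[abs_def] by simp
qed

lemma Min_filter:
  fixes f :: "'b \<Rightarrow> real"
  assumes J: "finite J" and ex: "\<exists>t\<in>J. a < f t"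
  shows "Min {t\<in>f`J. a < t} = (MIN t\<in>J. (if a < f t then f t else (MAX s\<in>J. f s)))"
proof -
  obtain t1 where t1: "t1 \<in> J" "a < f t1" using ex by blast
  show ?thesis
    by (rule Min_filter0[where f=f and a=a, OF J t1]) (simp add: J)
qed

lemma nx_image:
  fixes f :: "'b \<Rightarrow> real"
  assumes J: "finite J" "J \<noteq> {}"
  shows "nx \<gamma> (f`J) a = (if a < (MAX s\<in>J. f s)
      then ((MIN t\<in>J. (if a < f t then f t else (MAX s\<in>J. f s))) - a) powr \<gamma> else 0)"
proof -
  have iff: "(\<exists>t\<in>f`J. a < t) \<longleftrightarrow> a < (MAX s\<in>J. f s)"
    using J by (simp add: Max_gr_iff)
  show ?thesis unfolding nx_def iff
    using Min_filter[OF J(1), of a f] iff by auto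
qed

lemma entropy_image_meas:
  fixes F :: "'b \<Rightarrow> 'a \<Rightarrow> real"
  assumes J: "finite J" and F: "\<And>j. j \<in> J \<Longrightarrow> F j \<in> borel_measurable M"
  shows "(\<lambda>x. entropy \<gamma> ((\<lambda>j. F j x) ` J)) \<in> borel_measurable M"
proof (cases "J = {}")
  case True
  then show ?thesis by simp
next
  case False
  have eq: "entropy \<gamma> ((\<lambda>j. F j x) ` J) = (\<Sum>j\<in>J. (if F j x < (MAX s\<in>J. F s x)
      then ((MIN t\<in>J. (if F j x < F t x then F t x else (MAX s\<in>J. F s x))) - F j x) powr \<gamma> else 0)
       / (\<Sum>t\<in>J. if F t x = F j x then 1 else 0))" for x
    using J False
    by (simp add: entropy_nx sum_image_div[where f="\<lambda>j. F j x"] nx_image card_as_sum)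
  have mx: "(\<lambda>x. MAX s\<in>J. F s x) \<in> borel_measurable M"
    using J F by (rule borel_measurable_Max)
  show ?thesis
    unfolding eq
  proof (rule borel_measurable_sum)
    fix j assume j: "j \<in> J"
    have Fj: "F j \<in> borel_measurable M" using F j .
    have mn: "(\<lambda>x. MIN t\<in>J. (if F j x < F t x then F t x else (MAX s\<in>J. F s x))) \<in> borel_measurable M"
      using J proof (rule borel_measurable_Min)
        fix t assume "t \<in> J"
        then have Ft: "F t \<in> borel_measurable M" using F by blast
        show "(\<lambda>x. if F j x < F t x then F t x else (MAX s\<in>J. F s x)) \<in> borel_measurable M"
          by (rule measurable_If[OF Ft mx borel_measurable_less[OF Fj Ft]])
      qed
    have A: "(\<lambda>x. if F j x < (MAX s\<in>J. F s x)
      then ((MIN t\<in>J. (if F j x < F t x then F t x else (MAX s\<in>J. F s x))) - F j x) powr \<gamma> else 0)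
       \<in> borel_measurable M"
      by (rule measurable_If[OF powr_real_measurable[OF borel_measurable_diff[OF mn Fj] borel_measurable_const] borel_measurable_const borel_measurable_less[OF Fj mx]])
    have B: "(\<lambda>x. \<Sum>t\<in>J. if F t x = F j x then (1::real) else 0) \<in> borel_measurable M"
    proof (rule borel_measurable_sum)
      fix t assume "t \<in> J"
      then have Ft: "F t \<in> borel_measurable M" using F by blast
      show "(\<lambda>x. if F t x = F j x then (1::real) else 0) \<in> borel_measurable M"
        by (rule measurable_If[OF borel_measurable_const borel_measurable_const borel_measurable_eq[OF Ft Fj]])
    qed
    show "(\<lambda>x. (if F j x < (MAX s\<in>J. F s x)
      then ((MIN t\<in>J. (if F j x < F t x then F t x else (MAX s\<in>J. F s x))) - F j x) powr \<gamma> else 0)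
       / (\<Sum>t\<in>J. if F t x = F j x then 1 else 0)) \<in> borel_measurable M"
      by (rule borel_measurable_divide[OF A B])
  qed
qed

lemma tendsto_Min_fin:
  fixes f :: "'b \<Rightarrow> 'c \<Rightarrow> real"
  assumes "finite I" "I \<noteq> {}" "\<And>i. i \<in> I \<Longrightarrow> ((\<lambda>x. f i x) \<longlongrightarrow> l i) F"
  shows "((\<lambda>x. MIN i\<in>I. f i x) \<longlongrightarrow> (MIN i\<in>I. l i)) F"
  using assms
proof (induction I rule: finite_ne_induct)
  case (singleton x)
  then show ?case by simp
next
  case (insert a I)
  have "((\<lambda>x. min (f a x) (MIN i\<in>I. f i x)) \<longlongrightarrow> min (l a) (MIN i\<in>I. l i)) F"
    using insert by (intro tendsto_min) auto
  then show ?case using insert by simp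
qed

lemma entropy_rewrite:
  fixes H G :: "'b \<Rightarrow> real"
  assumes J: "finite J" and inj: "inj_on H J"
    and ord: "\<And>i j. i \<in> J \<Longrightarrow> j \<in> J \<Longrightarrow> H i < H j \<longleftrightarrow> G i < G j"
  shows "entropy \<gamma> (H ` J) = (\<Sum>j\<in>J. if \<exists>t\<in>J. G j < G t
      then ((MIN t\<in>{t\<in>J. G j < G t}. H t) - H j) powr \<gamma> else 0)"
proof -
  have "entropy \<gamma> (H ` J) = (\<Sum>j\<in>J. nx \<gamma> (H ` J) (H j))"
    using J inj by (simp add: entropy_nx sum.reindex)
  also have "\<dots> = (\<Sum>j\<in>J. if \<exists>t\<in>J. G j < G t
      then ((MIN t\<in>{t\<in>J. G j < G t}. H t) - H j) powr \<gamma> else 0)"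
  proof (rule sum.cong[OF refl])
    fix j assume j: "j \<in> J"
    have e1: "(\<exists>t\<in>H ` J. H j < t) \<longleftrightarrow> (\<exists>t\<in>J. G j < G t)"
      using ord j by auto
    have e2: "{t\<in>H ` J. H j < t} = H ` {t\<in>J. G j < G t}"
      using ord j by auto
    show "nx \<gamma> (H ` J) (H j) = (if \<exists>t\<in>J. G j < G t
      then ((MIN t\<in>{t\<in>J. G j < G t}. H t) - H j) powr \<gamma> else 0)"
      unfolding nx_def e1 e2 ..
  qed
  finally show ?thesis .
qed

lemma entropy_image_tendsto:
  fixes F :: "nat \<Rightarrow> 'b \<Rightarrow> real" and G :: "'b \<Rightarrow> real"
  assumes J: "finite J" and inj: "inj_on G J"
    and lim: "\<And>j. j \<in> J \<Longrightarrow> (\<lambda>n. F n j) \<longlonglongrightarrow> G j"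
  shows "(\<lambda>n. entropy \<gamma> (F n ` J)) \<longlonglongrightarrow> entropy \<gamma> (G ` J)"
proof -
  define \<phi> where "\<phi> H = (\<Sum>j\<in>J. if \<exists>t\<in>J. G j < G t
      then ((MIN t\<in>{t\<in>J. G j < G t}. H t) - H j) powr \<gamma> else 0)" for H :: "'b \<Rightarrow> real"
  have pair: "eventually (\<lambda>n. F n i < F n j \<longleftrightarrow> G i < G j) sequentially"
    if ij: "(i, j) \<in> J \<times> J" for i j
  proof -
    have i: "i \<in> J" and j: "j \<in> J" using ij by auto
    have d: "(\<lambda>n. F n j - F n i) \<longlonglongrightarrow> G j - G i"
      using lim[OF i] lim[OF j] by (intro tendsto_diff)
    consider "i = j" | "G i < G j" | "G j < G i"
      using inj i j by (metis inj_on_contraD linorder_neqE_linordered_idom)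
    then show ?thesis
    proof cases
      case 1
      then show ?thesis by simp
    next
      case 2
      then have "eventually (\<lambda>n. 0 < F n j - F n i) sequentially"
        using d by (intro order_tendstoD(1)) auto
      then show ?thesis by eventually_elim (use 2 in auto)
    next
      case 3
      then have "eventually (\<lambda>n. F n j - F n i < 0) sequentially"
        using d by (intro order_tendstoD(2)) auto
      then show ?thesis by eventually_elim (use 3 in auto)
    qed
  qed
  have ev: "eventually (\<lambda>n. \<forall>p\<in>J \<times> J. F n (fst p) < F n (snd p) \<longleftrightarrow> G (fst p) < G (snd p)) sequentially"
    using J pair by (intro eventually_ball_finite) auto
  have ev2: "eventually (\<lambda>n. entropy \<gamma> (F n ` J) = \<phi> (F n)) sequentially"
    using ev
  proof eventually_elim
    case (elim n)
    have ord: "\<And>i j. i \<in> J \<Longrightarrow> j \<in> J \<Longrightarrow> F n i < F n j \<longleftrightarrow> G i < G j"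
      using elim by force
    have injn: "inj_on (F n) J"
    proof (rule inj_onI)
      fix i j assume ij: "i \<in> J" "j \<in> J" "F n i = F n j"
      show "i = j"
      proof (rule ccontr)
        assume "i \<noteq> j"
        then have "G i \<noteq> G j" using inj ij by (meson inj_on_contraD)
        then have "G i < G j \<or> G j < G i" by linarith
        then show False using ord[OF ij(1,2)] ord[OF ij(2,1)] ij(3) by auto
      qed
    qed
    show ?case unfolding \<phi>_def by (rule entropy_rewrite[OF J injn ord])
  qed
  have eG: "entropy \<gamma> (G ` J) = \<phi> G"
    unfolding \<phi>_def by (rule entropy_rewrite[OF J inj]) simp
  have "(\<lambda>n. \<phi> (F n)) \<longlonglongrightarrow> \<phi> G"
    unfolding \<phi>_def
  proof (intro tendsto_sum)
    fix j assume j: "j \<in> J"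
    show "(\<lambda>n. if \<exists>t\<in>J. G j < G t then ((MIN t\<in>{t\<in>J. G j < G t}. F n t) - F n j) powr \<gamma> else 0)
      \<longlonglongrightarrow> (if \<exists>t\<in>J. G j < G t then ((MIN t\<in>{t\<in>J. G j < G t}. G t) - G j) powr \<gamma> else 0)"
    proof (cases "\<exists>t\<in>J. G j < G t")
      case True
      let ?T = "{t\<in>J. G j < G t}"
      have fT: "finite ?T" "?T \<noteq> {}" using J True by auto
      have m: "(\<lambda>n. MIN t\<in>?T. F n t) \<longlonglongrightarrow> (MIN t\<in>?T. G t)"
        using fT lim by (intro tendsto_Min_fin) auto
      have pos: "(MIN t\<in>?T. G t) - G j \<noteq> 0"
      proof -
        have "(MIN t\<in>?T. G t) \<in> G ` ?T" using fT by (intro Min_in) auto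
        then show ?thesis by auto
      qed
      have "(\<lambda>n. ((MIN t\<in>?T. F n t) - F n j) powr \<gamma>) \<longlonglongrightarrow> ((MIN t\<in>?T. G t) - G j) powr \<gamma>"
        using m lim[OF j] pos by (intro tendsto_intros) auto
      then show ?thesis using True by simp
    next
      case False
      then show ?thesis by simp
    qed
  qed
  then have "(\<lambda>n. entropy \<gamma> (F n ` J)) \<longlonglongrightarrow> \<phi> G"
    using ev2 by (simp add: tendsto_cong)
  then show ?thesis using eG by simp
qed

definition ext01 :: "('i \<Rightarrow> real) \<Rightarrow> 'i + bool \<Rightarrow> real" where
  "ext01 Y j = (case j of Inl i \<Rightarrow> Y i | Inr b \<Rightarrow> (if b then 1 else 0))"

lemma set01: "Y ` B \<union> {0, 1} = ext01 Y ` (Inl ` B \<union> Inr ` UNIV)"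
proof -
  have "ext01 Y ` (Inl ` B \<union> Inr ` UNIV) = Y ` B \<union> (\<lambda>b. if b then 1 else 0) ` UNIV"
    by (auto simp: ext01_def image_Un image_image)
  also have "(\<lambda>b::bool. if b then (1::real) else 0) ` UNIV = {0, 1}"
    by (auto simp: image_iff)
  finally show ?thesis by simp
qed

lemma energy_meas:
  assumes B: "finite B" and Mf: "\<And>i. i \<in> B \<Longrightarrow> Mf i \<in> borel_measurable M"
    and Yf: "\<And>i. i \<in> B \<Longrightarrow> Yf i \<in> borel_measurable M"
  shows "(\<lambda>x. energy_obj \<gamma> \<beta> (\<lambda>i. Mf i x) (\<lambda>i. Yf i x) B) \<in> borel_measurable M"
proof -
  have e: "entropy \<gamma> ((\<lambda>i. Yf i x) ` B \<union> {0, 1}) = entropy \<gamma> ((\<lambda>j. ext01 (\<lambda>i. Yf i x) j) ` (Inl ` B \<union> Inr ` UNIV))" for x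
    by (rule arg_cong[where f="entropy \<gamma>"], rule set01)
  have m: "(\<lambda>x. entropy \<gamma> ((\<lambda>j. ext01 (\<lambda>i. Yf i x) j) ` (Inl ` B \<union> Inr ` UNIV))) \<in> borel_measurable M"
  proof (rule entropy_image_meas)
    show "finite (Inl ` B \<union> Inr ` (UNIV :: bool set))" using B by simp
    fix j :: "_ + bool" assume "j \<in> Inl ` B \<union> Inr ` UNIV"
    then show "(\<lambda>x. ext01 (\<lambda>i. Yf i x) j) \<in> borel_measurable M"
      by (auto simp: ext01_def Yf)
  qed
  have s: "(\<lambda>x. \<beta> * (\<Sum>i\<in>B. Mf i x)) \<in> borel_measurable M"
    using Mf by (intro borel_measurable_times borel_measurable_const borel_measurable_sum) auto
  show ?thesis unfolding energy_obj_def e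
    by (rule borel_measurable_diff[OF s m])
qed

lemma energy_tendsto:
  assumes B: "finite B"
    and Ml: "\<And>i. i \<in> B \<Longrightarrow> (\<lambda>n. Mn n i) \<longlonglongrightarrow> Mi i"
    and Yl: "\<And>i. i \<in> B \<Longrightarrow> (\<lambda>n. Yn n i) \<longlonglongrightarrow> Yi i"
    and inj: "inj_on Yi B" and n01: "\<And>i. i \<in> B \<Longrightarrow> Yi i \<noteq> 0 \<and> Yi i \<noteq> 1"
    and bl: "bn \<longlonglongrightarrow> b"
  shows "(\<lambda>n. energy_obj \<gamma> (bn n) (Mn n) (Yn n) B) \<longlonglongrightarrow> energy_obj \<gamma> b Mi Yi B"
proof -
  have injE: "inj_on (ext01 Yi) (Inl ` B \<union> Inr ` UNIV)"
  proof (rule inj_onI)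
    fix u v assume u: "u \<in> Inl ` B \<union> Inr ` UNIV" and v: "v \<in> Inl ` B \<union> Inr ` UNIV"
      and e: "ext01 Yi u = ext01 Yi v"
    show "u = v"
    proof (cases u)
      case (Inl i)
      then have i: "i \<in> B" using u by auto
      show ?thesis
      proof (cases v)
        case (Inl i')
        then have i': "i' \<in> B" using v by auto
        have "Yi i = Yi i'" using e Inl \<open>u = Inl i\<close> by (simp add: ext01_def)
        then show ?thesis using inj i i' Inl \<open>u = Inl i\<close> by (simp add: inj_on_def)
      next
        case (Inr b)
        have "Yi i = (if b then 1 else 0)" using e Inr \<open>u = Inl i\<close> by (simp add: ext01_def)
        then show ?thesis using n01[OF i] by (simp split: if_splits)
      qed
    next
      case (Inr b)
      show ?thesis
      proof (cases v)
        case (Inl i')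
        then have i': "i' \<in> B" using v by auto
        have "Yi i' = (if b then 1 else 0)" using e Inl \<open>u = Inr b\<close> by (simp add: ext01_def)
        then show ?thesis using n01[OF i'] by (simp split: if_splits)
      next
        case (Inr b')
        have "(if b then 1 else 0) = (if b' then (1::real) else 0)" using e Inr \<open>u = Inr b\<close> by (simp add: ext01_def)
        then show ?thesis using Inr \<open>u = Inr b\<close> by (simp split: if_splits)
      qed
    qed
  qed
  have ent: "(\<lambda>n. entropy \<gamma> (ext01 (Yn n) ` (Inl ` B \<union> Inr ` UNIV))) \<longlonglongrightarrow> entropy \<gamma> (ext01 Yi ` (Inl ` B \<union> Inr ` UNIV))"
  proof (rule entropy_image_tendsto)
    show "finite (Inl ` B \<union> Inr ` (UNIV :: bool set))" using B by simp
    show "inj_on (ext01 Yi) (Inl ` B \<union> Inr ` UNIV)" by (rule injE)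
    fix j :: "_ + bool" assume "j \<in> Inl ` B \<union> Inr ` UNIV"
    then show "(\<lambda>n. ext01 (Yn n) j) \<longlonglongrightarrow> ext01 Yi j"
      by (auto simp: ext01_def Yl)
  qed
  have s: "(\<lambda>n. bn n * (\<Sum>i\<in>B. Mn n i)) \<longlonglongrightarrow> b * (\<Sum>i\<in>B. Mi i)"
    using bl Ml by (intro tendsto_mult tendsto_sum) auto
  show ?thesis unfolding energy_obj_def set01
    by (rule tendsto_diff[OF s ent])
qed

lemma space_PiM_UNIV: "space \<mu> = UNIV \<Longrightarrow> space (PiM UNIV (\<lambda>_::'i. \<mu>)) = UNIV"
  by (simp add: space_PiM PiE_def extensional_def)

lemma slice_null:
  fixes \<mu> :: "'b measure" and g :: "(nat \<Rightarrow> 'b) \<Rightarrow> real"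
  assumes \<mu>: "prob_space \<mu>" and sp: "space \<mu> = UNIV"
    and g: "g \<in> borel_measurable (PiM UNIV (\<lambda>_. \<mu>))"
    and AE: "AE X in PiM UNIV (\<lambda>_. \<mu>). emeasure \<mu> {x. g (X(j:=x)) = c} = 0"
  shows "emeasure (PiM UNIV (\<lambda>_. \<mu>)) {e. g e = c} = 0"
proof -
  let ?S = "PiM UNIV (\<lambda>_::nat. \<mu>)"
  interpret S: prob_space ?S by (rule prob_space_PiM) (use \<mu> in auto)
  interpret m: prob_space \<mu> by (rule \<mu>)
  interpret P2: pair_sigma_finite \<mu> ?S
    by (simp add: pair_sigma_finite_def m.sigma_finite_measure_axioms S.sigma_finite_measure_axioms)
  have spS: "space ?S = UNIV" by (rule space_PiM_UNIV[OF sp])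
  define f where "f = (\<lambda>w::'b \<times> (nat \<Rightarrow> 'b). (snd w)(j := fst w))"
  have f: "f \<in> measurable (\<mu> \<Otimes>\<^sub>M ?S) ?S"
    unfolding f_def by (rule measurable_fun_upd[where J=UNIV]) auto
  have D: "distr (\<mu> \<Otimes>\<^sub>M ?S) ?S f = ?S"
    using distr_pair_PiM_eq_PiM[of UNIV "\<lambda>_. \<mu>" j] \<mu>
    by (simp add: f_def case_prod_beta')
  define A where "A = {e. g e = c}"
  have A: "A \<in> sets ?S"
    using borel_measurable_eq[OF g borel_measurable_const[of c]] unfolding A_def spS by simp
  have "emeasure ?S A = emeasure (distr (\<mu> \<Otimes>\<^sub>M ?S) ?S f) A" using D by simp
  also have "\<dots> = emeasure (\<mu> \<Otimes>\<^sub>M ?S) (f -` A \<inter> space (\<mu> \<Otimes>\<^sub>M ?S))"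
    by (rule emeasure_distr[OF f A])
  also have "\<dots> = (\<integral>\<^sup>+ X. emeasure \<mu> ((\<lambda>x. (x, X)) -` (f -` A \<inter> space (\<mu> \<Otimes>\<^sub>M ?S))) \<partial>?S)"
    by (rule P2.emeasure_pair_measure_alt2) (rule measurable_sets[OF f A])
  also have "\<dots> = (\<integral>\<^sup>+ X. 0 \<partial>?S)"
  proof (rule nn_integral_cong_AE)
    show "AE X in ?S. emeasure \<mu> ((\<lambda>x. (x, X)) -` (f -` A \<inter> space (\<mu> \<Otimes>\<^sub>M ?S))) = 0"
      using AE
    proof eventually_elim
      case (elim X)
      have "(\<lambda>x. (x, X)) -` (f -` A \<inter> space (\<mu> \<Otimes>\<^sub>M ?S)) = {x. g (X(j:=x)) = c}"
        by (auto simp: f_def A_def space_pair_measure sp spS)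
      then show ?case using elim by simp
    qed
  qed
  also have "\<dots> = 0" by simp
  finally show ?thesis unfolding A_def .
qed

lemma pair_null1:
  fixes \<mu> :: "'b measure" and g :: "(nat \<Rightarrow> 'b) \<Rightarrow> real" and N :: "'c measure"
  assumes \<mu>: "prob_space \<mu>" and sp: "space \<mu> = UNIV" and N: "prob_space N"
    and g: "g \<in> borel_measurable (PiM UNIV (\<lambda>_. \<mu>))" and h: "h \<in> borel_measurable N"
    and AE: "\<And>c. AE X in PiM UNIV (\<lambda>_. \<mu>). emeasure \<mu> {x. g (X(j:=x)) = c} = 0"
  shows "emeasure (PiM UNIV (\<lambda>_. \<mu>) \<Otimes>\<^sub>M N) {w \<in> space (PiM UNIV (\<lambda>_. \<mu>) \<Otimes>\<^sub>M N). g (fst w) = h (snd w)} = 0"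
proof -
  let ?S = "PiM UNIV (\<lambda>_::nat. \<mu>)"
  interpret S: prob_space ?S by (rule prob_space_PiM) (use \<mu> in auto)
  interpret n: prob_space N by (rule N)
  interpret P2: pair_sigma_finite ?S N
    by (simp add: pair_sigma_finite_def n.sigma_finite_measure_axioms S.sigma_finite_measure_axioms)
  have spS: "space ?S = UNIV" by (rule space_PiM_UNIV[OF sp])
  let ?A = "{w \<in> space (?S \<Otimes>\<^sub>M N). g (fst w) = h (snd w)}"
  have A: "?A \<in> sets (?S \<Otimes>\<^sub>M N)"
    by (rule borel_measurable_eq) (use g h in measurable)
  have "emeasure (?S \<Otimes>\<^sub>M N) ?A = (\<integral>\<^sup>+ u. emeasure ?S ((\<lambda>x. (x, u)) -` ?A) \<partial>N)"
    by (rule P2.emeasure_pair_measure_alt2[OF A])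
  also have "\<dots> = (\<integral>\<^sup>+ u. 0 \<partial>N)"
  proof (rule nn_integral_cong)
    fix u assume u: "u \<in> space N"
    have "(\<lambda>x. (x, u)) -` ?A = {e. g e = h u}"
      using u by (auto simp: space_pair_measure spS)
    then show "emeasure ?S ((\<lambda>x. (x, u)) -` ?A) = 0"
      using slice_null[OF \<mu> sp g AE] by simp
  qed
  finally show ?thesis by simp
qed

lemma pair_null2:
  fixes \<mu> :: "'b measure" and g :: "(nat \<Rightarrow> 'b) \<Rightarrow> real" and N :: "'c measure"
  assumes \<mu>: "prob_space \<mu>" and sp: "space \<mu> = UNIV" and N: "prob_space N"
    and g: "g \<in> borel_measurable (PiM UNIV (\<lambda>_. \<mu>))" and h: "h \<in> borel_measurable N"
    and AE: "\<And>c. AE X in PiM UNIV (\<lambda>_. \<mu>). emeasure \<mu> {x. g (X(j:=x)) = c} = 0"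
  shows "emeasure (N \<Otimes>\<^sub>M PiM UNIV (\<lambda>_. \<mu>)) {w \<in> space (N \<Otimes>\<^sub>M PiM UNIV (\<lambda>_. \<mu>)). h (fst w) = g (snd w)} = 0"
proof -
  let ?S = "PiM UNIV (\<lambda>_::nat. \<mu>)"
  interpret S: prob_space ?S by (rule prob_space_PiM) (use \<mu> in auto)
  interpret n: prob_space N by (rule N)
  have spS: "space ?S = UNIV" by (rule space_PiM_UNIV[OF sp])
  let ?A = "{w \<in> space (N \<Otimes>\<^sub>M ?S). h (fst w) = g (snd w)}"
  have A: "?A \<in> sets (N \<Otimes>\<^sub>M ?S)"
    by (rule borel_measurable_eq) (use g h in measurable)
  have "emeasure (N \<Otimes>\<^sub>M ?S) ?A = (\<integral>\<^sup>+ u. emeasure ?S (Pair u -` ?A) \<partial>N)"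
    by (rule S.emeasure_pair_measure_alt[OF A])
  also have "\<dots> = (\<integral>\<^sup>+ u. 0 \<partial>N)"
  proof (rule nn_integral_cong)
    fix u assume u: "u \<in> space N"
    have "Pair u -` ?A = {e. g e = h u}"
      using u by (auto simp: space_pair_measure spS)
    then show "emeasure ?S (Pair u -` ?A) = 0"
      using slice_null[OF \<mu> sp g AE] by simp
  qed
  finally show ?thesis by simp
qed

lemma exp1_prob: "prob_space exp1_law"
  unfolding exp1_law_def by (rule prob_space_exponential_density) simp

lemma exp1_space: "space exp1_law = UNIV"
  unfolding exp1_law_def by simp

lemma exp1_sets: "sets exp1_law = sets borel"
  unfolding exp1_law_def by simp

lemma exp1_null: "A \<in> null_sets lborel \<Longrightarrow> emeasure exp1_law A = 0"
  unfolding exp1_law_def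
  by (subst emeasure_density) (auto intro: nn_integral_null_set)

lemma exp1_nonpos: "emeasure exp1_law {..0} = 0"
proof -
  have "emeasure exp1_law {..0} = (\<integral>\<^sup>+ x. ennreal (exponential_density 1 x) * indicator {..0} x \<partial>lborel)"
    unfolding exp1_law_def by (subst emeasure_density) auto
  also have "\<dots> = (\<integral>\<^sup>+ (x::real). 0 \<partial>lborel)"
  proof (rule nn_integral_cong_AE)
    show "AE x in lborel. ennreal (exponential_density 1 x) * indicator {..0} x = 0"
      using AE_lborel_singleton[of 0]
      by eventually_elim (auto simp: exponential_density_def indicator_def)
  qed
  finally show ?thesis by simp
qed

lemma exp1_AE_nonneg: "AE x in exp1_law. 0 \<le> x"
  by (rule AE_I'[of "{..0}"]) (auto simp: exp1_nonpos exp1_sets exp1_space)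

lemma unif_prob: "prob_space unif01_law"
  unfolding unif01_law_def by (rule prob_space_uniform_measure) auto

lemma unif_space: "space unif01_law = UNIV"
  unfolding unif01_law_def by simp

lemma unif_sets: "sets unif01_law = sets borel"
  unfolding unif01_law_def by simp

lemma unif_single: "emeasure unif01_law {x} = 0"
proof -
  have "emeasure lborel ({0..1} \<inter> {x}) = 0"
  proof (cases "x \<in> {0..1}")
    case True
    then have "{0..1} \<inter> {x} = {x}" by auto
    then show ?thesis by simp
  next
    case False
    then have "{0..1} \<inter> {x} = {}" by auto
    then show ?thesis by simp
  qed
  then show ?thesis unfolding unif01_law_def by (subst emeasure_uniform_measure) auto
qed

definition Tsum :: "(nat \<Rightarrow> real) \<Rightarrow> nat \<Rightarrow> real" where
  "Tsum e i = (\<Sum>l\<in>{1..i}. e l)"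

lemma Tsum_upd_less: "i < j \<Longrightarrow> Tsum (X(j := a)) i = Tsum X i"
  unfolding Tsum_def by (rule sum.cong) auto

lemma Tsum_upd_eq: "1 \<le> j \<Longrightarrow> Tsum (X(j := a)) j = (\<Sum>l\<in>{1..<j}. X l) + a"
proof -
  assume j: "1 \<le> j"
  have e: "{1..j} = insert j {1..<j}" using j by auto
  have "Tsum (X(j := a)) j = (\<Sum>l\<in>insert j {1..<j}. (X(j:=a)) l)"
    unfolding Tsum_def e ..
  also have "\<dots> = (X(j:=a)) j + (\<Sum>l\<in>{1..<j}. (X(j:=a)) l)"
    by (rule sum.insert) auto
  also have "(\<Sum>l\<in>{1..<j}. (X(j:=a)) l) = (\<Sum>l\<in>{1..<j}. X l)"
    by (rule sum.cong) auto
  also have "(X(j:=a)) j = a" by simp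
  finally show ?thesis by linarith
qed

lemma powr_inj_base:
  fixes x y p :: real
  assumes "0 < x" "0 < y" "p \<noteq> 0" "x powr p = y powr p"
  shows "x = y"
proof -
  have pp: "p * (1/p) = 1" using assms(3) by simp
  have x: "(x powr p) powr (1/p) = x" using assms(1) by (simp only: powr_powr pp powr_one_gt_zero_iff)
  have y: "(y powr p) powr (1/p) = y" using assms(2) by (simp only: powr_powr pp powr_one_gt_zero_iff)
  have "x = (x powr p) powr (1/p)" using x by simp
  also have "\<dots> = (y powr p) powr (1/p)" using assms(4) by simp
  also have "\<dots> = y" by (rule y)
  finally show ?thesis .
qed

lemma inj_slice:
  fixes p :: real
  assumes U: "finite U" and V: "finite V" and jU: "j \<in> U" and jV: "j \<notin> V"
    and le: "\<And>i. i \<in> U \<union> V \<Longrightarrow> i \<le> j" and j1: "1 \<le> j"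
    and X: "\<And>l. 0 \<le> X l" and p: "p \<noteq> 0" and a: "0 < a" and b: "0 < b"
    and eq: "(\<Sum>i\<in>U. Tsum (X(j:=a)) i powr p) - (\<Sum>i\<in>V. Tsum (X(j:=a)) i powr p)
           = (\<Sum>i\<in>U. Tsum (X(j:=b)) i powr p) - (\<Sum>i\<in>V. Tsum (X(j:=b)) i powr p)"
  shows "a = b"
proof -
  have decomp: "(\<Sum>i\<in>U. Tsum (X(j:=c)) i powr p) - (\<Sum>i\<in>V. Tsum (X(j:=c)) i powr p)
      = Tsum (X(j:=c)) j powr p + ((\<Sum>i\<in>U-{j}. Tsum X i powr p) - (\<Sum>i\<in>V. Tsum X i powr p))" for c
  proof -
    have s1: "(\<Sum>i\<in>U. Tsum (X(j:=c)) i powr p) = Tsum (X(j:=c)) j powr p + (\<Sum>i\<in>U-{j}. Tsum (X(j:=c)) i powr p)"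
      using U jU by (simp add: sum.remove)
    have s2: "(\<Sum>i\<in>U-{j}. Tsum (X(j:=c)) i powr p) = (\<Sum>i\<in>U-{j}. Tsum X i powr p)"
    proof (rule sum.cong[OF refl])
      fix i assume "i \<in> U - {j}"
      then have "i < j" using le by force
      then show "Tsum (X(j:=c)) i powr p = Tsum X i powr p" by (simp add: Tsum_upd_less)
    qed
    have s3: "(\<Sum>i\<in>V. Tsum (X(j:=c)) i powr p) = (\<Sum>i\<in>V. Tsum X i powr p)"
    proof (rule sum.cong[OF refl])
      fix i assume iV: "i \<in> V"
      have "i \<le> j" using le iV by blast
      moreover have "i \<noteq> j" using jV iV by auto
      ultimately have "i < j" by simp
      then show "Tsum (X(j:=c)) i powr p = Tsum X i powr p" by (simp add: Tsum_upd_less)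
    qed
    show ?thesis unfolding s1 s2 s3 by simp
  qed
  have "Tsum (X(j:=a)) j powr p = Tsum (X(j:=b)) j powr p"
    using eq unfolding decomp by simp
  then have e2: "((\<Sum>l\<in>{1..<j}. X l) + a) powr p = ((\<Sum>l\<in>{1..<j}. X l) + b) powr p"
    using j1 by (simp add: Tsum_upd_eq)
  have S: "0 \<le> (\<Sum>l\<in>{1..<j}. X l)" using X by (simp add: sum_nonneg)
  have "(\<Sum>l\<in>{1..<j}. X l) + a = (\<Sum>l\<in>{1..<j}. X l) + b"
    by (rule powr_inj_base[OF _ _ p e2]) (use S a b in auto)
  then show ?thesis by simp
qed

lemma exp_slice_null:
  fixes p c :: real
  assumes U: "finite U" and V: "finite V" and jU: "j \<in> U" and jV: "j \<notin> V"
    and le: "\<And>i. i \<in> U \<union> V \<Longrightarrow> i \<le> j" and j1: "1 \<le> j"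
    and X: "\<And>l. 0 \<le> X l" and p: "p \<noteq> 0"
  shows "emeasure exp1_law {a. (\<Sum>i\<in>U. Tsum (X(j:=a)) i powr p) - (\<Sum>i\<in>V. Tsum (X(j:=a)) i powr p) = c} = 0"
proof -
  let ?G = "\<lambda>a. (\<Sum>i\<in>U. Tsum (X(j:=a)) i powr p) - (\<Sum>i\<in>V. Tsum (X(j:=a)) i powr p)"
  let ?A = "{a. ?G a = c}"
  have nn0: "{..0::real} \<in> null_sets exp1_law"
    using exp1_nonpos by (simp add: null_sets_def exp1_sets)
  show ?thesis
  proof (cases "\<exists>a0>0. ?G a0 = c")
    case True
    then obtain a0 where a0: "0 < a0" "?G a0 = c" by blast
    have sub: "?A \<subseteq> {..0} \<union> {a0}"
    proof
      fix a assume "a \<in> ?A"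
      then have ga: "?G a = c" by simp
      show "a \<in> {..0} \<union> {a0}"
      proof (cases "0 < a")
        case True
        have eqa: "?G a = ?G a0" using ga a0(2) by simp
        have "a = a0"
          using inj_slice[where X=X and a=a and b=a0 and p=p and j=j and U=U and V=V] U V jU jV le j1 X p True a0(1) eqa
          by blast
        then show ?thesis by simp
      next
        case False
        then show ?thesis by simp
      qed
    qed
    have nn1: "{a0} \<in> null_sets exp1_law"
      using exp1_null[of "{a0}"] by (simp add: null_sets_def exp1_sets)
    have N: "{..0} \<union> {a0} \<in> null_sets exp1_law" using nn0 nn1 by (rule null_sets.Un)
    have "emeasure exp1_law ?A \<le> emeasure exp1_law ({..0} \<union> {a0})"
      by (rule emeasure_mono[OF sub]) (use N in auto)
    then show ?thesis using null_setsD1[OF N] by simp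
  next
    case False
    then have sub: "?A \<subseteq> {..0}" by (auto simp: not_less[symmetric])
    have "emeasure exp1_law ?A \<le> emeasure exp1_law {..0}"
      by (rule emeasure_mono[OF sub]) (use nn0 in auto)
    then show ?thesis using null_setsD1[OF nn0] by simp
  qed
qed

definition gtie :: "real \<Rightarrow> nat set \<Rightarrow> nat set \<Rightarrow> (nat \<Rightarrow> real) \<Rightarrow> real" where
  "gtie p A B e = (\<Sum>i\<in>A - B. Tsum e i powr p) - (\<Sum>i\<in>B - A. Tsum e i powr p)"

lemma tie_slice:
  fixes p c :: real
  assumes A: "finite A" and B: "finite B" and AB: "A \<noteq> B" and pos: "\<And>i. i \<in> A \<union> B \<Longrightarrow> 1 \<le> i"
    and X: "\<And>l. 0 \<le> X l" and p: "p \<noteq> 0"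
  shows "emeasure exp1_law {a. gtie p A B (X(Max ((A - B) \<union> (B - A)) := a)) = c} = 0"
proof -
  define D where "D = (A - B) \<union> (B - A)"
  define j where "j = Max D"
  have fD: "finite D" using A B by (simp add: D_def)
  have neD: "D \<noteq> {}" using AB by (auto simp: D_def)
  have jD: "j \<in> D" using fD neD by (simp add: j_def)
  have le: "\<And>i. i \<in> D \<Longrightarrow> i \<le> j" using fD by (simp add: j_def)
  have j1: "1 \<le> j" using jD pos unfolding D_def by blast
  have le': "\<And>i. i \<in> (A - B) \<union> (B - A) \<Longrightarrow> i \<le> j" using le unfolding D_def by blast
  have le'': "\<And>i. i \<in> (B - A) \<union> (A - B) \<Longrightarrow> i \<le> j" using le unfolding D_def by blast
  have fAB: "finite (A - B)" "finite (B - A)" using A B by auto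
  show ?thesis
  proof (cases "j \<in> A - B")
    case True
    have "emeasure exp1_law {a. (\<Sum>i\<in>A - B. Tsum (X(j:=a)) i powr p) - (\<Sum>i\<in>B - A. Tsum (X(j:=a)) i powr p) = c} = 0"
      by (rule exp_slice_null[where X=X and j=j and U="A-B" and V="B-A" and p=p and c=c, OF fAB True _ le' j1 X p]) (use True in blast)+
    then show ?thesis by (simp add: gtie_def j_def D_def)
  next
    case False
    then have jBA: "j \<in> B - A" using jD unfolding D_def by blast
    have "emeasure exp1_law {a. (\<Sum>i\<in>B - A. Tsum (X(j:=a)) i powr p) - (\<Sum>i\<in>A - B. Tsum (X(j:=a)) i powr p) = - c} = 0"
      by (rule exp_slice_null[where X=X and j=j and U="B-A" and V="A-B" and p=p and c="-c", OF fAB(2) fAB(1) jBA _ le'' j1 X p]) (use jBA in blast)+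
    moreover have "{a. (\<Sum>i\<in>B - A. Tsum (X(j:=a)) i powr p) - (\<Sum>i\<in>A - B. Tsum (X(j:=a)) i powr p) = - c}
       = {a. gtie p A B (X(j:=a)) = c}"
      unfolding gtie_def by (rule Collect_cong) linarith
    ultimately show ?thesis by (simp add: j_def D_def)
  qed
qed

lemma exp_AE_nonneg: "AE X in PiM UNIV (\<lambda>_::nat. exp1_law). \<forall>l. 0 \<le> X l"
proof -
  have "AE X in PiM UNIV (\<lambda>_::nat. exp1_law). 0 \<le> X l" for l
    by (rule AE_PiM_component[where I=UNIV and M="\<lambda>_. exp1_law" and P="\<lambda>x. 0 \<le> x", OF exp1_prob UNIV_I exp1_AE_nonneg])
  then show ?thesis by (subst AE_all_countable) blast
qed

lemma ent_meas:
  assumes B: "finite B" and Yf: "\<And>i. i \<in> B \<Longrightarrow> Yf i \<in> borel_measurable M"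
  shows "(\<lambda>x. entropy \<gamma> ((\<lambda>i. Yf i x) ` B \<union> {0, 1})) \<in> borel_measurable M"
proof -
  have e: "entropy \<gamma> ((\<lambda>i. Yf i x) ` B \<union> {0, 1}) = entropy \<gamma> ((\<lambda>j. ext01 (\<lambda>i. Yf i x) j) ` (Inl ` B \<union> Inr ` UNIV))" for x
    by (rule arg_cong[where f="entropy \<gamma>"], rule set01)
  have m: "(\<lambda>x. entropy \<gamma> ((\<lambda>j. ext01 (\<lambda>i. Yf i x) j) ` (Inl ` B \<union> Inr ` UNIV))) \<in> borel_measurable M"
  proof (rule entropy_image_meas)
    show "finite (Inl ` B \<union> Inr ` (UNIV :: bool set))" using B by simp
    fix j :: "_ + bool" assume "j \<in> Inl ` B \<union> Inr ` UNIV"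
    then show "(\<lambda>x. ext01 (\<lambda>i. Yf i x) j) \<in> borel_measurable M"
      by (auto simp: ext01_def Yf)
  qed
  show ?thesis unfolding e by (rule m)
qed

lemma um_meas:
  assumes Mf: "\<And>i. Mf i \<in> borel_measurable M" and Yf: "\<And>i. Yf i \<in> borel_measurable M"
  shows "{x \<in> space M. unique_maximizer \<gamma> b n (\<lambda>i. Mf i x) (\<lambda>i. Yf i x) A} \<in> sets M"
proof (cases "A \<subseteq> {1..n}")
  case True
  have eq: "{x \<in> space M. unique_maximizer \<gamma> b n (\<lambda>i. Mf i x) (\<lambda>i. Yf i x) A}
      = {x \<in> space M. \<forall>B\<in>Pow {1..n} - {A}. energy_obj \<gamma> b (\<lambda>i. Mf i x) (\<lambda>i. Yf i x) B
            < energy_obj \<gamma> b (\<lambda>i. Mf i x) (\<lambda>i. Yf i x) A}"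
  proof (rule Collect_cong)
    fix x
    have "(\<forall>B. B \<subseteq> {1..n} \<and> B \<noteq> A \<longrightarrow> energy_obj \<gamma> b (\<lambda>i. Mf i x) (\<lambda>i. Yf i x) B
            < energy_obj \<gamma> b (\<lambda>i. Mf i x) (\<lambda>i. Yf i x) A) \<longleftrightarrow>
          (\<forall>B\<in>Pow {1..n} - {A}. energy_obj \<gamma> b (\<lambda>i. Mf i x) (\<lambda>i. Yf i x) B
            < energy_obj \<gamma> b (\<lambda>i. Mf i x) (\<lambda>i. Yf i x) A)"
      by (simp add: Ball_def)
    then show "(x \<in> space M \<and> unique_maximizer \<gamma> b n (\<lambda>i. Mf i x) (\<lambda>i. Yf i x) A) \<longleftrightarrow>
      (x \<in> space M \<and> (\<forall>B\<in>Pow {1..n} - {A}. energy_obj \<gamma> b (\<lambda>i. Mf i x) (\<lambda>i. Yf i x) B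
            < energy_obj \<gamma> b (\<lambda>i. Mf i x) (\<lambda>i. Yf i x) A))"
      using True unfolding unique_maximizer_def by simp
  qed
  show ?thesis unfolding eq
  proof (rule sets.sets_Collect_finite_All)
    show "finite (Pow {1..n} - {A})" by simp
    fix B assume B: "B \<in> Pow {1..n} - {A}"
    have fB: "finite B" using B by (auto intro: finite_subset)
    have fA: "finite A" using True by (auto intro: finite_subset)
    show "{x \<in> space M. energy_obj \<gamma> b (\<lambda>i. Mf i x) (\<lambda>i. Yf i x) B
            < energy_obj \<gamma> b (\<lambda>i. Mf i x) (\<lambda>i. Yf i x) A} \<in> sets M"
      by (rule borel_measurable_less[OF energy_meas[OF fB Mf Yf] energy_meas[OF fA Mf Yf]])
  qed
next
  case False
  then have "{x \<in> space M. unique_maximizer \<gamma> b n (\<lambda>i. Mf i x) (\<lambda>i. Yf i x) A} = {}"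
    unfolding unique_maximizer_def by blast
  then show ?thesis by (metis sets.empty_sets)
qed

lemma comp_exp_meas: "(\<lambda>e. e l) \<in> borel_measurable (PiM UNIV (\<lambda>_::nat. exp1_law))"
proof -
  have "(\<lambda>e. e l) \<in> measurable (PiM UNIV (\<lambda>_::nat. exp1_law)) exp1_law"
    by (rule measurable_component_singleton) simp
  then show ?thesis using measurable_cong_sets[OF refl exp1_sets, of "PiM UNIV (\<lambda>_::nat. exp1_law)"] by simp
qed

lemma comp_unif_meas: "(\<lambda>e. e l) \<in> borel_measurable (PiM UNIV (\<lambda>_::nat. unif01_law))"
proof -
  have "(\<lambda>e. e l) \<in> measurable (PiM UNIV (\<lambda>_::nat. unif01_law)) unif01_law"
    by (rule measurable_component_singleton) simp
  then show ?thesis using measurable_cong_sets[OF refl unif_sets, of "PiM UNIV (\<lambda>_::nat. unif01_law)"] by simp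
qed

lemma gtie_meas: "gtie p A B \<in> borel_measurable (PiM UNIV (\<lambda>_::nat. exp1_law))"
proof -
  have T: "(\<lambda>e. Tsum e i powr p) \<in> borel_measurable (PiM UNIV (\<lambda>_::nat. exp1_law))" for i
    unfolding Tsum_def
    by (intro powr_real_measurable borel_measurable_sum borel_measurable_const comp_exp_meas)
  show ?thesis unfolding gtie_def[abs_def]
    by (intro borel_measurable_diff borel_measurable_sum T)
qed

lemma unif_slice1: "emeasure unif01_law {x. (X(m:=x)) m = c} = 0"
  using unif_single[of c] by simp

lemma unif_slice2: "m \<noteq> m' \<Longrightarrow> emeasure unif01_law {x. (X(m:=x)) m - (X(m:=x)) m' = c} = 0"
proof -
  assume "m \<noteq> m'"
  then have "{x. (X(m:=x)) m - (X(m:=x)) m' = c} = {c + X m'}" by auto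
  then show ?thesis using unif_single by simp
qed

lemma pair_null1':
  fixes \<mu> :: "'b measure" and g :: "(nat \<Rightarrow> 'b) \<Rightarrow> real" and N :: "'c measure"
  assumes \<mu>: "prob_space \<mu>" and sp: "space \<mu> = UNIV" and N: "prob_space N"
    and g: "g \<in> borel_measurable (PiM UNIV (\<lambda>_. \<mu>))" and h: "h \<in> borel_measurable N"
    and AE: "\<And>c. AE X in PiM UNIV (\<lambda>_. \<mu>). emeasure \<mu> {x. g (X(j:=x)) = c} = 0"
  shows "{w \<in> space (PiM UNIV (\<lambda>_. \<mu>) \<Otimes>\<^sub>M N). g (fst w) = h (snd w)} \<in> null_sets (PiM UNIV (\<lambda>_. \<mu>) \<Otimes>\<^sub>M N)"
proof (rule null_setsI)
  show "emeasure (PiM UNIV (\<lambda>_. \<mu>) \<Otimes>\<^sub>M N) {w \<in> space (PiM UNIV (\<lambda>_. \<mu>) \<Otimes>\<^sub>M N). g (fst w) = h (snd w)} = 0"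
    by (rule pair_null1[OF assms])
  show "{w \<in> space (PiM UNIV (\<lambda>_. \<mu>) \<Otimes>\<^sub>M N). g (fst w) = h (snd w)} \<in> sets (PiM UNIV (\<lambda>_. \<mu>) \<Otimes>\<^sub>M N)"
    by (rule borel_measurable_eq) (use g h in measurable)
qed

lemma pair_null2':
  fixes \<mu> :: "'b measure" and g :: "(nat \<Rightarrow> 'b) \<Rightarrow> real" and N :: "'c measure"
  assumes \<mu>: "prob_space \<mu>" and sp: "space \<mu> = UNIV" and N: "prob_space N"
    and g: "g \<in> borel_measurable (PiM UNIV (\<lambda>_. \<mu>))" and h: "h \<in> borel_measurable N"
    and AE: "\<And>c. AE X in PiM UNIV (\<lambda>_. \<mu>). emeasure \<mu> {x. g (X(j:=x)) = c} = 0"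
  shows "{w \<in> space (N \<Otimes>\<^sub>M PiM UNIV (\<lambda>_. \<mu>)). h (fst w) = g (snd w)} \<in> null_sets (N \<Otimes>\<^sub>M PiM UNIV (\<lambda>_. \<mu>))"
proof (rule null_setsI)
  show "emeasure (N \<Otimes>\<^sub>M PiM UNIV (\<lambda>_. \<mu>)) {w \<in> space (N \<Otimes>\<^sub>M PiM UNIV (\<lambda>_. \<mu>)). h (fst w) = g (snd w)} = 0"
    by (rule pair_null2[OF assms])
  show "{w \<in> space (N \<Otimes>\<^sub>M PiM UNIV (\<lambda>_. \<mu>)). h (fst w) = g (snd w)} \<in> sets (N \<Otimes>\<^sub>M PiM UNIV (\<lambda>_. \<mu>))"
    by (rule borel_measurable_eq) (use g h in measurable)
qed

lemma sum_diff_split: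
  fixes f :: "nat \<Rightarrow> real"
  assumes "finite A" "finite B"
  shows "(\<Sum>i\<in>A. f i) - (\<Sum>i\<in>B. f i) = (\<Sum>i\<in>A - B. f i) - (\<Sum>i\<in>B - A. f i)"
proof -
  have "(\<Sum>i\<in>A. f i) = (\<Sum>i\<in>A \<inter> B. f i) + (\<Sum>i\<in>A - B. f i)" by (rule sum.Int_Diff[OF assms(1)])
  moreover have "(\<Sum>i\<in>B. f i) = (\<Sum>i\<in>B \<inter> A. f i) + (\<Sum>i\<in>B - A. f i)" by (rule sum.Int_Diff[OF assms(2)])
  moreover have "B \<inter> A = A \<inter> B" by blast
  ultimately show ?thesis by simp
qed



theorem mainTheorem12:
  fixes P :: "'a measure"
    and D :: "real measure"
    and \<alpha> \<gamma> \<beta> :: real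
    and L0 :: "real \<Rightarrow> real"
    and b \<beta>N :: "nat \<Rightarrow> real"
    and MN YN :: "nat \<Rightarrow> nat \<Rightarrow> 'a \<Rightarrow> real"
    and Minf Yinf :: "nat \<Rightarrow> 'a \<Rightarrow> real"
  assumes P: "prob_space P"
    and D: "prob_space D" "sets D = sets borel"
    and D_pos: "measure D {x. x \<le> 0} = 0"
    and D_atomless: "\<forall>x. measure D {x} = 0"
    and alpha: "0 < \<alpha>" "\<alpha> < 1"
    and L0: "slowly_varying L0"
    and tail: "(\<lambda>t. measure D {x. x > t}) \<sim>[at_top] (\<lambda>t. L0 t * t powr (- \<alpha>))"
    and bN: "(\<lambda>N. measure D {x. x > b N}) \<sim>[sequentially] (\<lambda>N. 1 / real N)"
    and gamma: "0 < \<gamma>" "\<gamma> < 1"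
    and meas: "\<forall>N i. MN N i \<in> borel_measurable P \<and> YN N i \<in> borel_measurable P"
              "\<forall>i. Minf i \<in> borel_measurable P \<and> Yinf i \<in> borel_measurable P"
    and law_fin: "\<forall>N. distr P (PiM UNIV (\<lambda>_::nat. borel \<Otimes>\<^sub>M borel))
                    (\<lambda>x i. (MN N (Suc i) x, YN N (Suc i) x))
               = distr (PiM UNIV (\<lambda>_::nat. D)) (PiM UNIV (\<lambda>_::nat. borel \<Otimes>\<^sub>M borel))
                    (\<lambda>\<omega> i. disorder_config b N \<omega> (Suc i))"
    and law_inf: "distr P (PiM UNIV (\<lambda>_::nat. borel \<Otimes>\<^sub>M borel))
                    (\<lambda>x i. (Minf (Suc i) x, Yinf (Suc i) x))
               = distr (PiM UNIV (\<lambda>_::nat. exp1_law) \<Otimes>\<^sub>M PiM UNIV (\<lambda>_::nat. unif01_law))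
                    (PiM UNIV (\<lambda>_::nat. borel \<Otimes>\<^sub>M borel))
                    (\<lambda>eu i. continuum_config \<alpha> eu (Suc i))"
    and coupling: "AE x in P. \<forall>i\<ge>1. (\<lambda>N. MN N i x) \<longlonglongrightarrow> Minf i x \<and>
                                    (\<lambda>N. YN N i x) \<longlonglongrightarrow> Yinf i x"
    and beta: "0 < \<beta>" "\<beta>N \<longlonglongrightarrow> \<beta>"
  shows "\<forall>\<delta>>0. \<forall>k::nat. \<exists>Nk. \<forall>N>Nk.
           measure P {x \<in> space P. \<exists>A.
               unique_maximizer \<gamma> (\<beta>N N) (min (N - 1) k) (\<lambda>i. MN N i x) (\<lambda>i. YN N i x) A \<and>
               unique_maximizer \<gamma> \<beta> k (\<lambda>i. Minf i x) (\<lambda>i. Yinf i x) A} > 1 - \<delta>"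
proof (intro allI impI)
  fix \<delta> :: real and k :: nat
  assume \<delta>: "\<delta> > 0"
  interpret P: prob_space P by (rule P)
  interpret PEx: prob_space "PiM UNIV (\<lambda>_::nat. exp1_law)" by (rule prob_space_PiM) (rule exp1_prob)
  interpret PUn: prob_space "PiM UNIV (\<lambda>_::nat. unif01_law)" by (rule prob_space_PiM) (rule unif_prob)
  define PP where "PP = (PiM UNIV (\<lambda>_::nat. borel \<Otimes>\<^sub>M borel) :: (nat \<Rightarrow> real \<times> real) measure)"
  define F where "F = (\<lambda>x i. (Minf (Suc i) x, Yinf (Suc i) x))"
  define Q where "Q = PiM UNIV (\<lambda>_::nat. exp1_law) \<Otimes>\<^sub>M PiM UNIV (\<lambda>_::nat. unif01_law)"
  define G where "G = (\<lambda>eu i. continuum_config \<alpha> eu (Suc i))"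
  define p where "p = -1 / \<alpha>"
  have p0: "p \<noteq> 0" using alpha by (simp add: p_def)
  have law: "distr P PP F = distr Q PP G" using law_inf unfolding PP_def F_def Q_def G_def .
  have spPP: "space PP = UNIV"
    by (simp add: PP_def space_PiM space_pair_measure PiE_def extensional_def)
  have Fm: "F \<in> measurable P PP"
    unfolding F_def PP_def
  proof (rule measurable_PiM_single')
    fix i :: nat
    show "(\<lambda>x. (Minf (Suc i) x, Yinf (Suc i) x)) \<in> measurable P (borel \<Otimes>\<^sub>M borel)"
      by (rule measurable_Pair) (use meas(2) in auto)
  qed (auto simp: space_pair_measure)
  have fstQ: "(\<lambda>w. fst w l) \<in> borel_measurable Q" for l
    unfolding Q_def by (rule measurable_compose[OF measurable_fst comp_exp_meas])
  have sndQ: "(\<lambda>w. snd w l) \<in> borel_measurable Q" for l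
    unfolding Q_def by (rule measurable_compose[OF measurable_snd comp_unif_meas])
  have Gm: "G \<in> measurable Q PP"
    unfolding G_def PP_def
  proof (rule measurable_PiM_single')
    fix i :: nat
    show "(\<lambda>eu. continuum_config \<alpha> eu (Suc i)) \<in> measurable Q (borel \<Otimes>\<^sub>M borel)"
      unfolding continuum_config_def
      by (intro measurable_Pair powr_real_measurable borel_measurable_sum borel_measurable_const fstQ sndQ)
  qed (auto simp: space_pair_measure)
  have tr: "emeasure P (F -` Z \<inter> space P) = emeasure Q (G -` Z \<inter> space Q)" if Z: "Z \<in> sets PP" for Z
  proof -
    have "emeasure P (F -` Z \<inter> space P) = emeasure (distr P PP F) Z"
      by (rule emeasure_distr[OF Fm Z, symmetric])
    also have "\<dots> = emeasure (distr Q PP G) Z" by (simp add: law)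
    also have "\<dots> = emeasure Q (G -` Z \<inter> space Q)"
      by (rule emeasure_distr[OF Gm Z])
    finally show ?thesis .
  qed
  have nullZ: "AE x in P. F x \<notin> Z" if Z: "Z \<in> sets PP" and Q0: "emeasure Q (G -` Z \<inter> space Q) = 0" for Z
  proof (rule AE_I')
    show "F -` Z \<inter> space P \<in> null_sets P"
      by (rule null_setsI) (use tr[OF Z] Q0 measurable_sets[OF Fm Z] in auto)
  qed auto
  have setPP: "{z. f z = (c::real)} \<in> sets PP" if f: "f \<in> borel_measurable PP" for f c
    using borel_measurable_eq[OF f borel_measurable_const[of c]] spPP by simp
  have compPP: "(\<lambda>z. z l) \<in> measurable PP (borel \<Otimes>\<^sub>M borel)" for l
    unfolding PP_def by (rule measurable_component_singleton) simp
  have sndPP: "(\<lambda>z. snd (z l)) \<in> borel_measurable PP" for l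
    by (rule measurable_compose[OF compPP measurable_snd])
  have fstPP: "(\<lambda>z. fst (z l)) \<in> borel_measurable PP" for l
    by (rule measurable_compose[OF compPP measurable_fst])
  have Fsnd: "snd (F x (i - 1)) = Yinf i x" if "1 \<le> i" for x i
    using that by (simp add: F_def)
  have Ffst: "fst (F x (i - 1)) = Minf i x" if "1 \<le> i" for x i
    using that by (simp add: F_def)
  have Gsnd: "snd (G w (i - 1)) = snd w i" if "1 \<le> i" for w i
    using that by (simp add: G_def continuum_config_def)
  have Gfst: "fst (G w (i - 1)) = Tsum (fst w) i powr p" if "1 \<le> i" for w i
  proof -
    have si: "Suc (i - 1) = i" using that by simp
    have "fst (G w (i - 1)) = (\<Sum>j\<in>{1..Suc (i - 1)}. fst w j) powr (-1 / \<alpha>)"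
      by (simp only: G_def continuum_config_def fst_conv)
    then show ?thesis unfolding si Tsum_def p_def .
  qed
  let ?E = "PiM UNIV (\<lambda>_::nat. exp1_law)" and ?U = "PiM UNIV (\<lambda>_::nat. unif01_law)"
  have nullsub: "emeasure Q S = 0" if "S \<subseteq> T" "T \<in> null_sets Q" for S T
  proof -
    have "emeasure Q S \<le> emeasure Q T" using that by (intro emeasure_mono) auto
    then show ?thesis using null_setsD1[OF that(2)] by simp
  qed
  have objF: "energy_obj \<gamma> b (\<lambda>i. fst (F x (i - 1))) (\<lambda>i. snd (F x (i - 1))) A
      = energy_obj \<gamma> b (\<lambda>i. Minf i x) (\<lambda>i. Yinf i x) A" if A: "A \<subseteq> {1..k}" for x A b
  proof -
    have "(\<Sum>i\<in>A. fst (F x (i - 1))) = (\<Sum>i\<in>A. Minf i x)"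
      by (rule sum.cong[OF refl], rule Ffst) (use A in auto)
    moreover have "(\<lambda>i. snd (F x (i - 1))) ` A = (\<lambda>i. Yinf i x) ` A"
      by (rule image_cong[OF refl], rule Fsnd) (use A in auto)
    ultimately show ?thesis by (simp add: energy_obj_def)
  qed
  have objG: "energy_obj \<gamma> b (\<lambda>i. fst (G w (i - 1))) (\<lambda>i. snd (G w (i - 1))) A
      = b * (\<Sum>i\<in>A. Tsum (fst w) i powr p) - entropy \<gamma> ((\<lambda>i. snd w i) ` A \<union> {0, 1})" if A: "A \<subseteq> {1..k}" for w A b
  proof -
    have "(\<Sum>i\<in>A. fst (G w (i - 1))) = (\<Sum>i\<in>A. Tsum (fst w) i powr p)"
      by (rule sum.cong[OF refl], rule Gfst) (use A in auto)
    moreover have "(\<lambda>i. snd (G w (i - 1))) ` A = (\<lambda>i. snd w i) ` A"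
      by (rule image_cong[OF refl], rule Gsnd) (use A in auto)
    ultimately show ?thesis by (simp add: energy_obj_def)
  qed
  have AE0: "AE x in P. Yinf i x \<noteq> c" if i: "i \<in> {1..k}" for i c
  proof -
    let ?Z = "{z. snd (z (i - 1)) = c}"
    have Z: "?Z \<in> sets PP" by (rule setPP[OF sndPP])
    have T: "{w \<in> space (?E \<Otimes>\<^sub>M ?U). (\<lambda>_. c) (fst w) = (\<lambda>u. u i) (snd w)} \<in> null_sets (?E \<Otimes>\<^sub>M ?U)"
      by (rule pair_null2'[where j=i, OF unif_prob unif_space PEx.prob_space_axioms comp_unif_meas borel_measurable_const])
         (intro AE_I2, rule unif_slice1)
    have "G -` ?Z \<inter> space Q \<subseteq> {w \<in> space (?E \<Otimes>\<^sub>M ?U). (\<lambda>_. c) (fst w) = (\<lambda>u. u i) (snd w)}"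
      using Gsnd i by (auto simp: Q_def)
    then have "emeasure Q (G -` ?Z \<inter> space Q) = 0" using T unfolding Q_def by (rule nullsub[unfolded Q_def])
    then have "AE x in P. F x \<notin> ?Z" by (rule nullZ[OF Z])
    then show ?thesis by eventually_elim (use Fsnd i in auto)
  qed
  have AE1: "AE x in P. Yinf i x \<noteq> Yinf i' x" if i: "i \<in> {1..k}" "i' \<in> {1..k}" "i \<noteq> i'" for i i'
  proof -
    let ?Z = "{z. snd (z (i - 1)) - snd (z (i' - 1)) = 0}"
    have Z: "?Z \<in> sets PP" by (rule setPP[OF borel_measurable_diff[OF sndPP sndPP]])
    have g: "(\<lambda>u. u i - u i') \<in> borel_measurable ?U"
      by (rule borel_measurable_diff[OF comp_unif_meas comp_unif_meas])
    have T: "{w \<in> space (?E \<Otimes>\<^sub>M ?U). (\<lambda>_. 0) (fst w) = (\<lambda>u. u i - u i') (snd w)} \<in> null_sets (?E \<Otimes>\<^sub>M ?U)"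
      by (rule pair_null2'[where j=i, OF unif_prob unif_space PEx.prob_space_axioms g borel_measurable_const])
         (intro AE_I2, rule unif_slice2, rule i(3))
    have "G -` ?Z \<inter> space Q \<subseteq> {w \<in> space (?E \<Otimes>\<^sub>M ?U). (\<lambda>_. 0) (fst w) = (\<lambda>u. u i - u i') (snd w)}"
      using Gsnd i by (auto simp: Q_def)
    then have "emeasure Q (G -` ?Z \<inter> space Q) = 0" using T unfolding Q_def by (rule nullsub[unfolded Q_def])
    then have "AE x in P. F x \<notin> ?Z" by (rule nullZ[OF Z])
    then show ?thesis by eventually_elim (use Fsnd i in auto)
  qed
  have AE2: "AE x in P. energy_obj \<gamma> \<beta> (\<lambda>i. Minf i x) (\<lambda>i. Yinf i x) A \<noteq> energy_obj \<gamma> \<beta> (\<lambda>i. Minf i x) (\<lambda>i. Yinf i x) B"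
    if AB: "A \<subseteq> {1..k}" "B \<subseteq> {1..k}" "A \<noteq> B" for A B
  proof -
    have fA: "finite A" and fB: "finite B" using AB by (auto intro: finite_subset)
    let ?Z = "{z. energy_obj \<gamma> \<beta> (\<lambda>i. fst (z (i - 1))) (\<lambda>i. snd (z (i - 1))) A
                 - energy_obj \<gamma> \<beta> (\<lambda>i. fst (z (i - 1))) (\<lambda>i. snd (z (i - 1))) B = 0}"
    have Z: "?Z \<in> sets PP"
      by (rule setPP[OF borel_measurable_diff[OF energy_meas[OF fA fstPP sndPP] energy_meas[OF fB fstPP sndPP]]])
    define h where "h u = (entropy \<gamma> ((\<lambda>i. u i) ` A \<union> {0, 1}) - entropy \<gamma> ((\<lambda>i. u i) ` B \<union> {0, 1})) / \<beta>" for u :: "nat \<Rightarrow> real"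
    have h: "h \<in> borel_measurable ?U"
      unfolding h_def[abs_def]
      by (intro borel_measurable_divide borel_measurable_diff ent_meas borel_measurable_const fA fB comp_unif_meas)
    have T: "{w \<in> space (?E \<Otimes>\<^sub>M ?U). gtie p A B (fst w) = h (snd w)} \<in> null_sets (?E \<Otimes>\<^sub>M ?U)"
    proof (rule pair_null1'[where j="Max ((A - B) \<union> (B - A))", OF exp1_prob exp1_space PUn.prob_space_axioms gtie_meas h])
      fix c
      show "AE X in ?E. emeasure exp1_law {x. gtie p A B (X(Max ((A - B) \<union> (B - A)) := x)) = c} = 0"
        using exp_AE_nonneg
      proof eventually_elim
        case (elim X)
        show ?case
          by (rule tie_slice[OF fA fB AB(3) _ _ p0]) (use AB elim in auto)
      qed
    qed
    have "G -` ?Z \<inter> space Q \<subseteq> {w \<in> space (?E \<Otimes>\<^sub>M ?U). gtie p A B (fst w) = h (snd w)}"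
    proof
      fix w assume w: "w \<in> G -` ?Z \<inter> space Q"
      then have e: "(\<beta> * (\<Sum>i\<in>A. Tsum (fst w) i powr p) - entropy \<gamma> ((\<lambda>i. snd w i) ` A \<union> {0, 1}))
         - (\<beta> * (\<Sum>i\<in>B. Tsum (fst w) i powr p) - entropy \<gamma> ((\<lambda>i. snd w i) ` B \<union> {0, 1})) = 0"
        using objG[OF AB(1)] objG[OF AB(2)] by simp
      have "gtie p A B (fst w) = (\<Sum>i\<in>A. Tsum (fst w) i powr p) - (\<Sum>i\<in>B. Tsum (fst w) i powr p)"
        unfolding gtie_def using sum_diff_split[OF fA fB] by simp
      also have "\<dots> = h (snd w)"
        using e beta(1) unfolding h_def by (simp add: field_simps)
      finally show "w \<in> {w \<in> space (?E \<Otimes>\<^sub>M ?U). gtie p A B (fst w) = h (snd w)}"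
        using w by (simp add: Q_def)
    qed
    then have "emeasure Q (G -` ?Z \<inter> space Q) = 0" using T unfolding Q_def by (rule nullsub[unfolded Q_def])
    then have "AE x in P. F x \<notin> ?Z" by (rule nullZ[OF Z])
    then show ?thesis
    proof eventually_elim
      case (elim x)
      then show ?case using objF[OF AB(1)] objF[OF AB(2)] by simp
    qed
  qed
  define E where "E N = {x \<in> space P. \<exists>A.
               unique_maximizer \<gamma> (\<beta>N N) (min (N - 1) k) (\<lambda>i. MN N i x) (\<lambda>i. YN N i x) A \<and>
               unique_maximizer \<gamma> \<beta> k (\<lambda>i. Minf i x) (\<lambda>i. Yinf i x) A}" for N
  have exA: "(\<exists>A. X A \<and> unique_maximizer \<gamma> b k Mf Yf A) \<longleftrightarrow> (\<exists>A\<in>Pow {1..k}. X A \<and> unique_maximizer \<gamma> b k Mf Yf A)"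
    for X b Mf Yf by (auto simp: unique_maximizer_def)
  have Esets: "E N \<in> sets P" for N
  proof -
    have "E N = {x \<in> space P. \<exists>A\<in>Pow {1..k}.
               unique_maximizer \<gamma> (\<beta>N N) (min (N - 1) k) (\<lambda>i. MN N i x) (\<lambda>i. YN N i x) A \<and>
               unique_maximizer \<gamma> \<beta> k (\<lambda>i. Minf i x) (\<lambda>i. Yinf i x) A}"
      unfolding E_def exA ..
    also have "\<dots> \<in> sets P"
    proof (rule sets.sets_Collect_finite_Ex)
      fix A
      show "{x \<in> space P. unique_maximizer \<gamma> (\<beta>N N) (min (N - 1) k) (\<lambda>i. MN N i x) (\<lambda>i. YN N i x) A \<and>
               unique_maximizer \<gamma> \<beta> k (\<lambda>i. Minf i x) (\<lambda>i. Yinf i x) A} \<in> sets P"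
        by (intro sets.sets_Collect_conj um_meas) (use meas in auto)
    qed simp
    finally show ?thesis .
  qed
  define H where "H n = {x \<in> space P. \<forall>N. n \<le> N \<longrightarrow> x \<in> E N}" for n
  have Hsets: "H n \<in> sets P" for n
    unfolding H_def
  proof (rule sets.sets_Collect_countable_All)
    fix N
    have "{x \<in> space P. n \<le> N \<longrightarrow> x \<in> E N} = (if n \<le> N then E N else space P)"
      using sets.sets_into_space[OF Esets[of N]] by auto
    then show "{x \<in> space P. n \<le> N \<longrightarrow> x \<in> E N} \<in> sets P" using Esets by simp
  qed
  have Hinc: "incseq H" by (auto simp: incseq_def H_def)
  have HE: "H N \<subseteq> E N" for N by (auto simp: H_def)
  have goodH: "x \<in> (\<Union>n. H n)"
    if x: "x \<in> space P"
      and conv: "\<forall>i\<ge>1. (\<lambda>N. MN N i x) \<longlonglongrightarrow> Minf i x \<and> (\<lambda>N. YN N i x) \<longlonglongrightarrow> Yinf i x"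
      and n0: "\<forall>i\<in>{1..k}. Yinf i x \<noteq> 0" and n1: "\<forall>i\<in>{1..k}. Yinf i x \<noteq> 1"
      and dist: "\<forall>i\<in>{1..k}. \<forall>i'\<in>{1..k}. i \<noteq> i' \<longrightarrow> Yinf i x \<noteq> Yinf i' x"
      and ties: "\<forall>A\<in>Pow {1..k}. \<forall>B\<in>Pow {1..k}. A \<noteq> B \<longrightarrow>
          energy_obj \<gamma> \<beta> (\<lambda>i. Minf i x) (\<lambda>i. Yinf i x) A \<noteq> energy_obj \<gamma> \<beta> (\<lambda>i. Minf i x) (\<lambda>i. Yinf i x) B"
    for x
  proof -
    define oI where "oI A = energy_obj \<gamma> \<beta> (\<lambda>i. Minf i x) (\<lambda>i. Yinf i x) A" for A
    define oN where "oN N A = energy_obj \<gamma> (\<beta>N N) (\<lambda>i. MN N i x) (\<lambda>i. YN N i x) A" for N A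
    have finI: "finite (oI ` Pow {1..k})" by simp
    have neI: "oI ` Pow {1..k} \<noteq> {}" using Pow_bottom by blast
    have "Max (oI ` Pow {1..k}) \<in> oI ` Pow {1..k}" using finI neI by (rule Max_in)
    then obtain A0 where A0: "A0 \<in> Pow {1..k}" "oI A0 = Max (oI ` Pow {1..k})" by auto
    have A0max: "oI B < oI A0" if "B \<in> Pow {1..k}" "B \<noteq> A0" for B
    proof -
      have "oI B \<le> oI A0" using A0(2) finI that(1) by simp
      moreover have "oI B \<noteq> oI A0" using ties that A0(1) unfolding oI_def by blast
      ultimately show ?thesis by simp
    qed
    have umI: "unique_maximizer \<gamma> \<beta> k (\<lambda>i. Minf i x) (\<lambda>i. Yinf i x) A0"
      unfolding unique_maximizer_def using A0(1) A0max unfolding oI_def by auto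
    have lim: "(\<lambda>N. oN N B) \<longlonglongrightarrow> oI B" if B: "B \<in> Pow {1..k}" for B
      unfolding oN_def oI_def
    proof (rule energy_tendsto)
      show "finite B" using B by (auto intro: finite_subset)
      fix i assume i: "i \<in> B"
      then have i1: "1 \<le> i" and ik: "i \<in> {1..k}" using B by auto
      show "(\<lambda>n. MN n i x) \<longlonglongrightarrow> Minf i x" using conv i1 by blast
      show "(\<lambda>n. YN n i x) \<longlonglongrightarrow> Yinf i x" using conv i1 by blast
      show "Yinf i x \<noteq> 0 \<and> Yinf i x \<noteq> 1" using n0 n1 ik by blast
    next
      show "inj_on (\<lambda>i. Yinf i x) B"
        using dist B by (auto simp: inj_on_def)
      show "\<beta>N \<longlonglongrightarrow> \<beta>" by (rule beta(2))
    qed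
    have evB: "eventually (\<lambda>N. oN N B < oN N A0) sequentially" if B: "B \<in> Pow {1..k} - {A0}" for B
    proof -
      have "(\<lambda>N. oN N A0 - oN N B) \<longlonglongrightarrow> oI A0 - oI B"
        using lim[of A0] lim[of B] A0(1) B by (intro tendsto_diff) auto
      moreover have "0 < oI A0 - oI B" using A0max B by auto
      ultimately have "eventually (\<lambda>N. 0 < oN N A0 - oN N B) sequentially"
        by (rule order_tendstoD(1))
      then show ?thesis by eventually_elim simp
    qed
    have ev: "eventually (\<lambda>N. \<forall>B\<in>Pow {1..k} - {A0}. oN N B < oN N A0) sequentially"
      by (rule eventually_ball_finite) (use evB in auto)
    have ev2: "eventually (\<lambda>N. Suc k \<le> N) sequentially" by (rule eventually_ge_at_top)
    have "eventually (\<lambda>N. x \<in> E N) sequentially"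
      using ev ev2
    proof eventually_elim
      case (elim N)
      have mk: "min (N - 1) k = k" using elim(2) by simp
      have "unique_maximizer \<gamma> (\<beta>N N) (min (N - 1) k) (\<lambda>i. MN N i x) (\<lambda>i. YN N i x) A0"
        unfolding mk unique_maximizer_def using A0(1) elim(1) unfolding oN_def by auto
      then show ?case using umI x unfolding E_def by blast
    qed
    then obtain n where "\<forall>N\<ge>n. x \<in> E N" by (auto simp: eventually_sequentially)
    then have "x \<in> H n" using x by (auto simp: H_def)
    then show ?thesis by blast
  qed
  have AEk: "AE x in P. (\<forall>i\<in>{1..k}. Yinf i x \<noteq> 0) \<and> (\<forall>i\<in>{1..k}. Yinf i x \<noteq> 1)
      \<and> (\<forall>i\<in>{1..k}. \<forall>i'\<in>{1..k}. i \<noteq> i' \<longrightarrow> Yinf i x \<noteq> Yinf i' x)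
      \<and> (\<forall>A\<in>Pow {1..k}. \<forall>B\<in>Pow {1..k}. A \<noteq> B \<longrightarrow>
          energy_obj \<gamma> \<beta> (\<lambda>i. Minf i x) (\<lambda>i. Yinf i x) A \<noteq> energy_obj \<gamma> \<beta> (\<lambda>i. Minf i x) (\<lambda>i. Yinf i x) B)"
  proof (intro AE_conjI)
    show "AE x in P. \<forall>i\<in>{1..k}. Yinf i x \<noteq> 0" by (rule AE_finite_allI) (auto intro: AE0)
    show "AE x in P. \<forall>i\<in>{1..k}. Yinf i x \<noteq> 1" by (rule AE_finite_allI) (auto intro: AE0)
    show "AE x in P. \<forall>i\<in>{1..k}. \<forall>i'\<in>{1..k}. i \<noteq> i' \<longrightarrow> Yinf i x \<noteq> Yinf i' x"
    proof (rule AE_finite_allI, simp, rule AE_finite_allI, simp)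
      fix i i' assume "i \<in> {1..k}" "i' \<in> {1..k}"
      then show "AE x in P. i \<noteq> i' \<longrightarrow> Yinf i x \<noteq> Yinf i' x"
        by (cases "i = i'") (auto intro: AE1)
    qed
    show "AE x in P. \<forall>A\<in>Pow {1..k}. \<forall>B\<in>Pow {1..k}. A \<noteq> B \<longrightarrow>
          energy_obj \<gamma> \<beta> (\<lambda>i. Minf i x) (\<lambda>i. Yinf i x) A \<noteq> energy_obj \<gamma> \<beta> (\<lambda>i. Minf i x) (\<lambda>i. Yinf i x) B"
    proof (rule AE_finite_allI, simp, rule AE_finite_allI, simp)
      fix A B assume "A \<in> Pow {1..k}" "B \<in> Pow {1..k}"
      show "AE x in P. A \<noteq> B \<longrightarrow>
          energy_obj \<gamma> \<beta> (\<lambda>i. Minf i x) (\<lambda>i. Yinf i x) A \<noteq> energy_obj \<gamma> \<beta> (\<lambda>i. Minf i x) (\<lambda>i. Yinf i x) B"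
      proof (cases "A = B")
        case True
        then show ?thesis by simp
      next
        case False
        have "A \<subseteq> {1..k}" "B \<subseteq> {1..k}" using \<open>A \<in> Pow {1..k}\<close> \<open>B \<in> Pow {1..k}\<close> by auto
        then show ?thesis using AE2[of A B] False by simp
      qed
    qed
  qed
  have AEH: "AE x in P. x \<in> (\<Union>n. H n)"
    using AE_space coupling AEk
  proof (eventually_elim)
    case (elim x)
    show ?case by (rule goodH) (use elim in auto)
  qed
  have UH: "(\<Union>n. H n) \<in> sets P" using Hsets by auto
  have m1: "measure P (\<Union>n. H n) = 1" using P.AE_in_set_eq_1[OF UH] AEH by simp
  have "(\<lambda>n. measure P (H n)) \<longlonglongrightarrow> measure P (\<Union>n. H n)"
    by (rule P.finite_Lim_measure_incseq) (use Hsets Hinc in auto)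
  then have "(\<lambda>n. measure P (H n)) \<longlonglongrightarrow> 1" using m1 by simp
  then have "eventually (\<lambda>n. 1 - \<delta> < measure P (H n)) sequentially"
    by (rule order_tendstoD(1)) (use \<delta> in simp)
  then obtain n0 where n0: "\<And>n. n \<ge> n0 \<Longrightarrow> 1 - \<delta> < measure P (H n)"
    by (auto simp: eventually_sequentially)
  show "\<exists>Nk. \<forall>N>Nk.
           measure P {x \<in> space P. \<exists>A.
               unique_maximizer \<gamma> (\<beta>N N) (min (N - 1) k) (\<lambda>i. MN N i x) (\<lambda>i. YN N i x) A \<and>
               unique_maximizer \<gamma> \<beta> k (\<lambda>i. Minf i x) (\<lambda>i. Yinf i x) A} > 1 - \<delta>"
  proof (intro exI allI impI)
    fix N assume N: "n0 < N"
    have "1 - \<delta> < measure P (H N)" using n0 N by simp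
    also have "\<dots> \<le> measure P (E N)" by (rule P.finite_measure_mono[OF HE Esets])
    finally show "measure P {x \<in> space P. \<exists>A.
               unique_maximizer \<gamma> (\<beta>N N) (min (N - 1) k) (\<lambda>i. MN N i x) (\<lambda>i. YN N i x) A \<and>
               unique_maximizer \<gamma> \<beta> k (\<lambda>i. Minf i x) (\<lambda>i. Yinf i x) A} > 1 - \<delta>"
      unfolding E_def .
  qed
qed

end
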